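(* Let $k$ be a field, $U$ a $d$-dimensional $k$-vector space, and $\phi_3$ a nonzero element of $D_3U^*$. Then there exist a unit $\alpha$ of $k$ and a basis $x_1^*,\dots,x_d^*$ of $U^*$ such that (a) $\alpha\phi_3=x_1^{*(3)}+x_1^*\phi_{2,0}+\phi_{3,0}$, or (b) $\alpha\phi_3=x_1^{*(2)}x_2^*+x_1^*\phi_{2,0}+\phi_{3,0}$, or (c) $k$ has characteristic two and $\phi_3=\sum_{1\le i<j<l\le d}\alpha_{i,j,l}\,x_i^*x_j^*x_l^*$ for some $\alpha_{i,j,l}\in k$, where in (a) and (b) $\phi_{i,0}$ is an element of $D_i\big(\bigoplus_{2\le j\le d}k\,x_j^*\big)$ for $i=2,3$.
   Context: $U^*=\operatorname{Hom}_k(U,k)$ and $D_\bullet U^*=\bigoplus_iD_iU^*$, $D_iU^*=\operatorname{Hom}_k(\operatorname{Sym}_iU,k)$, is the divided power algebra of $U^*$. For $v\in U^*$, $v^{(n)}$ denotes the $n$-th divided power (behaving like $v^n/n!$); for a basis $x_1^*,\dots,x_d^*$ of $U^*$ dual to a basis $x_1,\dots,x_d$ of $U$, $x_1^{*(a_1)}\cdots x_d^{*(a_d)}$ is the functional taking value $1$ on the monomial $x_1^{a_1}\cdots x_d^{a_d}$ and $0$ on the other monomials of the same degree; factors written without parenthesized exponent have exponent one. For a subspace $W\subseteq U^*$, $D_iW$ is the subspace of $D_iU^*$ generated by products of $i$ elements of $W$ (in the divided power sense). *)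

theory Defs
  imports Main "HOL-Library.Multiset" "HOL-Library.Cardinality"
begin

text \<open>The d-dimensional space U is modelled as coordinate vectors 'n => 'a,
  with d = CARD('n). Elements of D_i U* = Hom(Sym_i U, k) are modelled as
  symmetric multilinear forms in i arguments, i.e. as functions on lists of
  vectors which vanish on lists of length different from i.\<close>

definition lin_fun :: "(('n \<Rightarrow> 'a::field) \<Rightarrow> 'a) \<Rightarrow> bool" where
  "lin_fun f \<longleftrightarrow> (\<forall>u v. f (\<lambda>i. u i + v i) = f u + f v) \<and> (\<forall>c u. f (\<lambda>i. c * u i) = c * f u)"

definition dual_space :: "(('n \<Rightarrow> 'a::field) \<Rightarrow> 'a) set" where
  "dual_space = {f. lin_fun f}"

definition is_dual_basis :: "nat \<Rightarrow> (nat \<Rightarrow> ('n \<Rightarrow> 'a::field) \<Rightarrow> 'a) \<Rightarrow> bool" where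
  "is_dual_basis d xs \<longleftrightarrow>
     (\<forall>i\<in>{1..d}. xs i \<in> dual_space) \<and>
     (\<forall>c. (\<forall>u. (\<Sum>i=1..d. c i * xs i u) = 0) \<longrightarrow> (\<forall>i\<in>{1..d}. c i = 0)) \<and>
     (\<forall>f\<in>dual_space. \<exists>c. f = (\<lambda>u. \<Sum>i=1..d. c i * xs i u))"

definition Dsp :: "nat \<Rightarrow> (('n \<Rightarrow> 'a::field) list \<Rightarrow> 'a) set" where
  "Dsp n = {f. (\<forall>us. length us \<noteq> n \<longrightarrow> f us = 0) \<and>
     (\<forall>us j u v. length us = n \<longrightarrow> j < n \<longrightarrow>
        f (us[j := (\<lambda>i. u i + v i)]) = f (us[j := u]) + f (us[j := v])) \<and>
     (\<forall>us j c u. length us = n \<longrightarrow> j < n \<longrightarrow>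
        f (us[j := (\<lambda>i. c * u i)]) = c * f (us[j := u])) \<and>
     (\<forall>us vs. mset us = mset vs \<longrightarrow> f us = f vs)}"

definition dpow :: "(('n \<Rightarrow> 'a::field) \<Rightarrow> 'a) \<Rightarrow> nat \<Rightarrow> ('n \<Rightarrow> 'a) list \<Rightarrow> 'a" where
  "dpow v n = (\<lambda>us. if length us = n then prod_list (map v us) else 0)"

text \<open>Multiplication D_p U* x D_q U* -> D_(p+q) U* of the divided power algebra
  (shuffle product of symmetric multilinear forms).\<close>
definition dmult :: "nat \<Rightarrow> nat \<Rightarrow> (('n \<Rightarrow> 'a::field) list \<Rightarrow> 'a) \<Rightarrow> (('n \<Rightarrow> 'a) list \<Rightarrow> 'a)
     \<Rightarrow> ('n \<Rightarrow> 'a) list \<Rightarrow> 'a" where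
  "dmult p q f g = (\<lambda>us. if length us = p + q then
      (\<Sum>S\<in>{S. S \<subseteq> {0..<p+q} \<and> card S = p}. f (nths us S) * g (nths us ({0..<p+q} - S)))
     else 0)"

fun dmono :: "((('n \<Rightarrow> 'a::field) \<Rightarrow> 'a) \<times> nat) list \<Rightarrow> ('n \<Rightarrow> 'a) list \<Rightarrow> 'a" where
  "dmono [] = (\<lambda>us. if us = [] then 1 else 0)"
| "dmono ((w, a) # ps) = dmult a (sum_list (map snd ps)) (dpow w a) (dmono ps)"

definition Dsub :: "nat \<Rightarrow> (('n \<Rightarrow> 'a::field) \<Rightarrow> 'a) set \<Rightarrow> (('n \<Rightarrow> 'a) list \<Rightarrow> 'a) set" where
  "Dsub n W = {f. \<exists>gs cs. (\<forall>g\<in>set gs. \<exists>ps. set (map fst ps) \<subseteq> W \<and> sum_list (map snd ps) = n \<and> g = dmono ps)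
        \<and> f = (\<lambda>us. \<Sum>j<length gs. cs j * (gs ! j) us)}"

definition span_from2 :: "nat \<Rightarrow> (nat \<Rightarrow> ('n \<Rightarrow> 'a::field) \<Rightarrow> 'a) \<Rightarrow> (('n \<Rightarrow> 'a) \<Rightarrow> 'a) set" where
  "span_from2 d xs = {f. \<exists>c. f = (\<lambda>u. \<Sum>j=2..d. c j * xs j u)}"

end

theory Submission
  imports Defs
begin

lemma sets31: "{S. S \<subseteq> {0..<3::nat} \<and> card S = 1} = {{0},{1},{2}}"
  by (auto simp: card_1_singleton_iff)
lemma sets32: "{S. S \<subseteq> {0..<3::nat} \<and> card S = 2} = {{0,1},{0,2},{1,2}}"
proof (intro equalityI subsetI)
  fix S assume "S \<in> {S. S \<subseteq> {0..<3::nat} \<and> card S = 2}"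
  then obtain x y where S: "S = {x,y}" "x \<noteq> y" "x < 3" "y < 3"
    by (auto simp: card_2_iff)
  then have "x \<in> {0,1,2}" "y \<in> {0,1,2}" by auto
  with S show "S \<in> {{0,1},{0,2},{1,2}}" by (auto simp: insert_commute)
qed auto
lemma setsnn: "{S. S \<subseteq> {0..<n::nat} \<and> card S = n} = {{0..<n}}"
proof (intro equalityI subsetI)
  fix S assume "S \<in> {S. S \<subseteq> {0..<n::nat} \<and> card S = n}"
  then have "S \<subseteq> {0..<n}" "card S = n" by auto
  then show "S \<in> {{0..<n}}" using card_subset_eq[of "{0..<n}" S] by simp
qed auto
lemma sets21: "{S. S \<subseteq> {0..<2::nat} \<and> card S = 1} = {{0},{1}}"
  by (auto simp: card_1_singleton_iff)

lemma sets31': "{S. S \<subseteq> {0..<Suc (Suc (Suc 0))} \<and> card S = Suc 0} = {{0},{Suc 0},{Suc (Suc 0)}}"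
  using sets31 by (simp add: numeral_eq_Suc)
lemma sets32': "{S. S \<subseteq> {0..<Suc (Suc (Suc 0))} \<and> card S = Suc (Suc 0)} = {{0,Suc 0},{0,Suc (Suc 0)},{Suc 0,Suc (Suc 0)}}"
  using sets32 by (simp add: numeral_eq_Suc)
lemma sets21': "{S. S \<subseteq> {0..<Suc (Suc 0)} \<and> card S = Suc 0} = {{0},{Suc 0}}"
  using sets21 by (simp add: numeral_eq_Suc)

lemma dmult_off: "length us \<noteq> p + q \<Longrightarrow> dmult p q f g us = 0"
  by (simp add: dmult_def)

lemma dmult12: "dmult 1 2 f g [a,b,c] = f [a] * g [b,c] + f [b] * g [a,c] + f [c] * g [a,b]"
  unfolding dmult_def by (simp add: sets31' nths_Cons numeral_eq_Suc)

lemma set_neqI: "x \<in> A \<Longrightarrow> x \<notin> B \<Longrightarrow> A \<noteq> B" by auto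

lemma sum3: "A \<noteq> B \<Longrightarrow> A \<noteq> C \<Longrightarrow> B \<noteq> C \<Longrightarrow> sum F {A,B,C} = F A + F B + F C"
  by (simp add: add.assoc)

lemma dmult21: "dmult 2 1 f g [a,b,c] = f [a,b] * g [c] + f [a,c] * g [b] + f [b,c] * g [a]"
proof -
  have "dmult 2 1 f g [a,b,c] = (\<Sum>S\<in>{{0,1},{0,2},{1,2}}. f (nths [a,b,c] S) * g (nths [a,b,c] ({0..<2+1} - S)))"
  proof -
    have e: "length [a,b,c] = 2+1" by simp
    have s: "{S. S \<subseteq> {0..<2+1::nat} \<and> card S = 2} = {{0,1},{0,2},{1,2}}" using sets32 by simp
    show ?thesis unfolding dmult_def if_P[OF e] s by (rule refl)
  qed
  also have "\<dots> = f (nths [a,b,c] {0,1}) * g (nths [a,b,c] ({0..<2+1} - {0,1}))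
     + f (nths [a,b,c] {0,2}) * g (nths [a,b,c] ({0..<2+1} - {0,2}))
     + f (nths [a,b,c] {1,2}) * g (nths [a,b,c] ({0..<2+1} - {1,2}))"
    by (rule sum3; rule set_neqI[of 1] set_neqI[of 0]; simp)
  also have "\<dots> = f [a,b] * g [c] + f [a,c] * g [b] + f [b,c] * g [a]"
    by (simp add: nths_Cons numeral_eq_Suc)
  finally show ?thesis .
qed

lemma dmult11: "dmult 1 1 f g [b,c] = f [b] * g [c] + f [c] * g [b]"
  unfolding dmult_def by (simp add: sets21' nths_Cons numeral_eq_Suc)

lemma nths_all: "nths us {0..<length us} = us"
  by (metis lessThan_atLeast0 nths_upt_eq_take take_all order_refl)

lemma dmult_n0: "dmult n 0 f g us = (if length us = n then f us * g [] else 0)"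
  unfolding dmult_def by (auto simp: setsnn nths_all)

lemma dmono_single: "dmono [(v,n)] = dpow v n"
  by (rule ext) (simp add: dmult_n0 dpow_def)

lemma dmono_11: "dmono [(v,1),(w,1)] [b,c] = v b * w c + v c * w b"
proof -
  have "dmono [(v,1),(w,1)] = dmult 1 (sum_list (map snd [(w,1)])) (dpow v 1) (dmono [(w,1)])"
    by (rule dmono.simps(2))
  also have "\<dots> = dmult 1 1 (dpow v 1) (dpow w 1)" by (simp only: dmono_single) simp
  finally have "dmono [(v,1),(w,1)] [b,c] = dmult 1 1 (dpow v 1) (dpow w 1) [b,c]" by simp
  also have "\<dots> = dpow v 1 [b] * dpow w 1 [c] + dpow v 1 [c] * dpow w 1 [b]" by (rule dmult11)
  finally show ?thesis by (simp add: dpow_def)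
qed

lemma dmono_21: "dmono [(v,2),(w,1)] [a,b,c] = v a * v b * w c + v a * v c * w b + v b * v c * w a"
proof -
  have "dmono [(v,2),(w,1)] = dmult 2 (sum_list (map snd [(w,1)])) (dpow v 2) (dmono [(w,1)])"
    by (rule dmono.simps(2))
  also have "\<dots> = dmult 2 1 (dpow v 2) (dpow w 1)" by (simp only: dmono_single) simp
  finally have "dmono [(v,2),(w,1)] [a,b,c] = dmult 2 1 (dpow v 2) (dpow w 1) [a,b,c]" by simp
  also have "\<dots> = dpow v 2 [a,b] * dpow w 1 [c] + dpow v 2 [a,c] * dpow w 1 [b] + dpow v 2 [b,c] * dpow w 1 [a]" by (rule dmult21)
  finally show ?thesis by (simp add: dpow_def)
qed


locale tri =
  fixes phi :: "('n \<Rightarrow> 'a::field) list \<Rightarrow> 'a"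
  assumes D: "phi \<in> Dsp 3"
begin

lemma off: "length us \<noteq> 3 \<Longrightarrow> phi us = 0"
  using D by (simp add: Dsp_def)

lemma addall: "\<forall>us j u v. length us = 3 \<longrightarrow> j < 3 \<longrightarrow>
        phi (us[j := (\<lambda>i. u i + v i)]) = phi (us[j := u]) + phi (us[j := v])"
  using D unfolding Dsp_def by blast
lemma scall: "\<forall>us j c u. length us = 3 \<longrightarrow> j < 3 \<longrightarrow>
        phi (us[j := (\<lambda>i. c * u i)]) = c * phi (us[j := u])"
  using D unfolding Dsp_def by blast

lemma add1: "phi [(\<lambda>t. u t + v t), b, c] = phi [u,b,c] + phi [v,b,c]"
  using addall[rule_format, of "[u,b,c]" 0 u v] by simp

lemma sc1: "phi [(\<lambda>t. k * u t), b, c] = k * phi [u,b,c]"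
  using scall[rule_format, of "[u,b,c]" 0 k u] by simp

lemma perm: "mset us = mset vs \<Longrightarrow> phi us = phi vs"
  using D unfolding Dsp_def by blast

lemma sym12: "phi [a,b,c] = phi [b,a,c]"
  by (rule perm) (simp add: add_mset_commute)
lemma sym23: "phi [a,b,c] = phi [a,c,b]"
  by (rule perm) (simp add: add_mset_commute)
lemma sym13: "phi [a,b,c] = phi [c,b,a]"
  by (rule perm) (simp add: add_mset_commute)

lemma add2: "phi [a, (\<lambda>t. u t + v t), c] = phi [a,u,c] + phi [a,v,c]"
  using sym12[of a "\<lambda>t. u t + v t" c] sym12[of a u c] sym12[of a v c] add1[of u v a c] by simp
lemma add3: "phi [a, b, (\<lambda>t. u t + v t)] = phi [a,b,u] + phi [a,b,v]"
  using sym13[of a b "\<lambda>t. u t + v t"] sym13[of a b u] sym13[of a b v] add1[of u v b a] by simp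
lemma sc2: "phi [a, (\<lambda>t. k * u t), c] = k * phi [a,u,c]"
  using sym12[of a "\<lambda>t. k * u t" c] sym12[of a u c] sc1[of k u a c] by simp
lemma sc3: "phi [a, b, (\<lambda>t. k * u t)] = k * phi [a,b,u]"
  using sym13[of a b "\<lambda>t. k * u t"] sym13[of a b u] sc1[of k u b a] by simp

lemma zero1: "phi [(\<lambda>t. 0), b, c] = 0"
  using sc1[of 0 b b c] by simp

lemma sum1: "finite S \<Longrightarrow> phi [(\<lambda>t. \<Sum>i\<in>S. f i t), b, c] = (\<Sum>i\<in>S. phi [f i, b, c])"
proof (induction S rule: finite_induct)
  case empty then show ?case by (simp add: zero1)
next
  case (insert x F)
  then show ?case by (simp add: add1)
qed

lemma sumsc1: "finite S \<Longrightarrow> phi [(\<lambda>t. \<Sum>i\<in>S. g i * f i t), b, c] = (\<Sum>i\<in>S. g i * phi [f i, b, c])"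
  by (simp add: sum1 sc1)
lemma sumsc2: "finite S \<Longrightarrow> phi [a, (\<lambda>t. \<Sum>i\<in>S. g i * f i t), c] = (\<Sum>i\<in>S. g i * phi [a, f i, c])"
proof -
  assume S: "finite S"
  have "phi [a, (\<lambda>t. \<Sum>i\<in>S. g i * f i t), c] = phi [(\<lambda>t. \<Sum>i\<in>S. g i * f i t), a, c]" by (rule sym12)
  also have "\<dots> = (\<Sum>i\<in>S. g i * phi [f i, a, c])" using S by (rule sumsc1)
  also have "\<dots> = (\<Sum>i\<in>S. g i * phi [a, f i, c])" by (rule sum.cong) (auto intro: sym12[symmetric])
  finally show ?thesis .
qed
lemma sumsc3: "finite S \<Longrightarrow> phi [a, b, (\<lambda>t. \<Sum>i\<in>S. g i * f i t)] = (\<Sum>i\<in>S. g i * phi [a, b, f i])"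
proof -
  assume S: "finite S"
  have "phi [a, b, (\<lambda>t. \<Sum>i\<in>S. g i * f i t)] = phi [(\<lambda>t. \<Sum>i\<in>S. g i * f i t), b, a]" by (rule sym13)
  also have "\<dots> = (\<Sum>i\<in>S. g i * phi [f i, b, a])" using S by (rule sumsc1)
  also have "\<dots> = (\<Sum>i\<in>S. g i * phi [a, b, f i])" by (rule sum.cong) (auto intro: sym13[symmetric])
  finally show ?thesis .
qed

lemma exp8: "phi [(\<lambda>t. \<alpha> * e t + A t), (\<lambda>t. \<beta> * e t + B t), (\<lambda>t. \<gamma> * e t + C t)] =
   phi [A,B,C] + \<alpha> * phi [e,B,C] + \<beta> * phi [A,e,C] + \<gamma> * phi [A,B,e]
   + \<alpha> * \<beta> * phi [e,e,C] + \<alpha> * \<gamma> * phi [e,B,e] + \<beta> * \<gamma> * phi [A,e,e]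
   + \<alpha> * \<beta> * \<gamma> * phi [e,e,e]"
  by (simp add: add1 add2 add3 sc1 sc2 sc3 algebra_simps)

end

lemma length3: "length us = 3 \<Longrightarrow> \<exists>a b c. us = [a,b,c]"
  by (auto simp: numeral_3_eq_3 length_Suc_conv)


lemma lin_add: "lin_fun f \<Longrightarrow> f (\<lambda>i. u i + v i) = f u + f v"
  by (simp add: lin_fun_def)
lemma lin_sc: "lin_fun f \<Longrightarrow> f (\<lambda>i. c * u i) = c * f u"
  by (simp add: lin_fun_def)
lemma lin_zero: "lin_fun f \<Longrightarrow> f (\<lambda>i. 0) = 0"
  using lin_sc[of f 0 "\<lambda>i. 0"] by simp

lemma lin_sum: assumes f: "lin_fun f" and S: "finite S"
  shows "f (\<lambda>t. \<Sum>i\<in>S. c i * g i t) = (\<Sum>i\<in>S. c i * f (g i))"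
  using S
proof (induction S rule: finite_induct)
  case empty then show ?case by (simp add: lin_zero[OF f])
next
  case (insert y F)
  have "f (\<lambda>t. \<Sum>i\<in>insert y F. c i * g i t) = f (\<lambda>t. c y * g y t + (\<Sum>i\<in>F. c i * g i t))"
    using insert by simp
  also have "\<dots> = f (\<lambda>t. c y * g y t) + f (\<lambda>t. \<Sum>i\<in>F. c i * g i t)"
    using lin_add[OF f, of "\<lambda>t. c y * g y t" "\<lambda>t. \<Sum>i\<in>F. c i * g i t"] by simp
  also have "\<dots> = c y * f (g y) + (\<Sum>i\<in>F. c i * f (g i))"
    using insert lin_sc[OF f] by simp
  finally show ?case using insert by simp
qed

lemma lin_fun_add: "lin_fun f \<Longrightarrow> lin_fun g \<Longrightarrow> lin_fun (\<lambda>v. f v + g v)"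
  by (simp add: lin_fun_def algebra_simps)
lemma lin_fun_scale: "lin_fun f \<Longrightarrow> lin_fun (\<lambda>v. k * f v)"
  by (simp add: lin_fun_def algebra_simps)
lemma lin_fun_comb: "lin_fun f \<Longrightarrow> lin_fun g \<Longrightarrow> lin_fun (\<lambda>v. f v + k * g v)"
  by (simp add: lin_fun_def algebra_simps)
lemma lin_fun_sumc: "(\<forall>i\<in>S. lin_fun (g i)) \<Longrightarrow> lin_fun (\<lambda>v. \<Sum>i\<in>S. c i * g i v)"
  unfolding lin_fun_def
  by (simp add: algebra_simps sum.distrib sum_distrib_left)

definition bpair :: "nat \<Rightarrow> (nat \<Rightarrow> 'n \<Rightarrow> 'a::field) \<Rightarrow> (nat \<Rightarrow> ('n \<Rightarrow> 'a) \<Rightarrow> 'a) \<Rightarrow> bool" where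
  "bpair d e x \<longleftrightarrow> (\<forall>i\<in>{1..d}. lin_fun (x i)) \<and> (\<forall>v. v = (\<lambda>t. \<Sum>i=1..d. x i v * e i t)) \<and>
     (\<forall>i\<in>{1..d}. \<forall>j\<in>{1..d}. x i (e j) = (if i = j then 1 else 0))"

lemma bpair_lin: "bpair d e x \<Longrightarrow> i \<in> {1..d} \<Longrightarrow> lin_fun (x i)"
  by (simp add: bpair_def)
lemma bpair_rec: "bpair d e x \<Longrightarrow> v = (\<lambda>t. \<Sum>i=1..d. x i v * e i t)"
  unfolding bpair_def by blast
lemma bpair_recp: "bpair d e x \<Longrightarrow> v t = (\<Sum>i=1..d. x i v * e i t)"
  using bpair_rec by metis
lemma bpair_dual: "bpair d e x \<Longrightarrow> i \<in> {1..d} \<Longrightarrow> j \<in> {1..d} \<Longrightarrow> x i (e j) = (if i = j then 1 else 0)"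
  by (simp add: bpair_def)

lemma bpair_linexp: "bpair d e x \<Longrightarrow> lin_fun f \<Longrightarrow> f v = (\<Sum>i=1..d. x i v * f (e i))"
proof -
  assume b: "bpair d e x" and f: "lin_fun f"
  have "f v = f (\<lambda>t. \<Sum>i=1..d. x i v * e i t)" using bpair_rec[OF b, of v] by simp
  also have "\<dots> = (\<Sum>i=1..d. x i v * f (e i))" by (rule lin_sum[OF f]) simp
  finally show ?thesis .
qed

lemma bpair_is_dual: "bpair d e x \<Longrightarrow> is_dual_basis d x"
proof -
  assume b: "bpair d e x"
  have 1: "\<forall>i\<in>{1..d}. x i \<in> dual_space" using b by (simp add: bpair_def dual_space_def)
  have 2: "\<forall>i\<in>{1..d}. c i = 0" if h: "\<forall>u. (\<Sum>i=1..d. c i * x i u) = 0" for c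
  proof
    fix j assume j: "j \<in> {1..d}"
    have "0 = (\<Sum>i=1..d. c i * x i (e j))" using h by simp
    also have "\<dots> = (\<Sum>i=1..d. if i = j then c i else 0)"
      by (rule sum.cong) (simp_all add: bpair_dual[OF b _ j])
    also have "\<dots> = c j" using j by simp
    finally show "c j = 0" by simp
  qed
  have 3: "\<exists>c. f = (\<lambda>u. \<Sum>i=1..d. c i * x i u)" if "f \<in> dual_space" for f
  proof
    have f: "lin_fun f" using that by (simp add: dual_space_def)
    show "f = (\<lambda>u. \<Sum>i=1..d. f (e i) * x i u)"
    proof
      fix u have "f u = (\<Sum>i=1..d. x i u * f (e i))" by (rule bpair_linexp[OF b f])
      then show "f u = (\<Sum>i=1..d. f (e i) * x i u)" by (simp add: mult.commute)
    qed
  qed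
  show ?thesis unfolding is_dual_basis_def using 1 2 3 by blast
qed

lemma bpair_std:
  fixes g :: "nat \<Rightarrow> 'n::finite"
  assumes g: "bij_betw g {1..d} UNIV"
  shows "bpair d (\<lambda>i t. if t = g i then (1::'a::field) else 0) (\<lambda>i v. v (g i))"
  unfolding bpair_def
proof (intro conjI ballI allI)
  fix i show "lin_fun (\<lambda>v::'n\<Rightarrow>'a. v (g i))" by (simp add: lin_fun_def)
next
  fix v :: "'n \<Rightarrow> 'a"
  show "v = (\<lambda>t. \<Sum>i=1..d. v (g i) * (if t = g i then 1 else 0))"
  proof
    fix t
    have "(\<Sum>i=1..d. v (g i) * (if t = g i then 1 else 0)) = (\<Sum>s\<in>UNIV. v s * (if t = s then 1 else 0))"
      using sum.reindex_bij_betw[OF g, of "\<lambda>s. v s * (if t = s then 1 else 0)"] by simp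
    also have "\<dots> = (\<Sum>s\<in>UNIV. if t = s then v s else 0)" by (rule sum.cong) auto
    also have "\<dots> = v t" by simp
    finally show "v t = (\<Sum>i=1..d. v (g i) * (if t = g i then 1 else 0))" by simp
  qed
next
  fix i j assume "i \<in> {1..d}" "j \<in> {1..d}"
  then have "g i = g j \<longleftrightarrow> i = j" using g by (meson bij_betw_imp_inj_on inj_on_eq_iff)
  then show "(if g i = g j then 1 else 0) = (if i = j then (1::'a) else 0)" by auto
qed

definition sw :: "nat \<Rightarrow> nat \<Rightarrow> nat \<Rightarrow> nat" where
  "sw a b i = (if i = a then b else if i = b then a else i)"

lemma sw_sw: "sw a b (sw a b i) = i" by (simp add: sw_def)
lemma sw_in: "a \<in> A \<Longrightarrow> b \<in> A \<Longrightarrow> i \<in> A \<Longrightarrow> sw a b i \<in> A" by (simp add: sw_def)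
lemma sw_eq: "sw a b i = sw a b j \<longleftrightarrow> i = j" by (metis sw_sw)

lemma sum_sw: "a \<in> A \<Longrightarrow> b \<in> A \<Longrightarrow> (\<Sum>i\<in>A. h (sw a b i)) = (\<Sum>i\<in>A. h i)"
  by (rule sum.reindex_bij_witness[where i="sw a b" and j="sw a b"]) (simp_all add: sw_sw sw_in)

lemma bpair_swap:
  assumes b: "bpair d e x" and a: "a \<in> {1..d}" and bb: "b \<in> {1..d}"
  shows "bpair d (\<lambda>i. e (sw a b i)) (\<lambda>i. x (sw a b i))"
  unfolding bpair_def
proof (intro conjI ballI allI)
  fix i assume i: "i \<in> {1..d}" then show "lin_fun (x (sw a b i))" by (rule bpair_lin[OF b sw_in[OF a bb]])
next
  fix v :: "'a \<Rightarrow> 'b"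
  show "v = (\<lambda>t. \<Sum>i=1..d. x (sw a b i) v * e (sw a b i) t)"
  proof
    fix t show "v t = (\<Sum>i=1..d. x (sw a b i) v * e (sw a b i) t)"
      using bpair_recp[OF b, of v t] sum_sw[OF a bb, of "\<lambda>i. x i v * e i t"] by simp
  qed
next
  fix i j assume i: "i \<in> {1..d}" and j: "j \<in> {1..d}"
  show "x (sw a b i) (e (sw a b j)) = (if i = j then 1 else 0)"
    using bpair_dual[OF b sw_in[OF a bb i] sw_in[OF a bb j]] by (simp add: sw_eq)
qed


lemma sum_split: "a \<in> {1..d::nat} \<Longrightarrow> (\<Sum>i=1..d. h i) = h a + (\<Sum>i\<in>{1..d}-{a}. h i)"
  by (rule sum.remove) auto

lemma bpair_exch:
  assumes b: "bpair d e x" and a: "a \<in> {1..d}" and u: "x a u \<noteq> 0"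
  shows "bpair d (e(a := u))
     (\<lambda>i. if i = a then (\<lambda>v. inverse (x a u) * x a v) else (\<lambda>v. x i v + (- (x i u * inverse (x a u))) * x a v))"
  unfolding bpair_def
proof (intro conjI ballI allI)
  fix i assume i: "i \<in> {1..d}"
  show "lin_fun (if i = a then (\<lambda>v. inverse (x a u) * x a v) else (\<lambda>v. x i v + (- (x i u * inverse (x a u))) * x a v))"
  proof (cases "i = a")
    case True show ?thesis unfolding if_P[OF True] by (rule lin_fun_scale[OF bpair_lin[OF b a]])
  next
    case False show ?thesis unfolding if_not_P[OF False] by (rule lin_fun_comb[OF bpair_lin[OF b i] bpair_lin[OF b a]])
  qed
next
  fix v :: "'a \<Rightarrow> 'b"
  let ?R = "{1..d} - {a}"
  let ?k = "inverse (x a u)"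
  show "v = (\<lambda>t. \<Sum>i=1..d. (if i = a then (\<lambda>v. ?k * x a v) else (\<lambda>v. x i v + (- (x i u * ?k)) * x a v)) v * (e(a := u)) i t)"
  proof
    fix t
    have hv: "v t = x a v * e a t + (\<Sum>i\<in>?R. x i v * e i t)"
      using bpair_recp[OF b, of v t] sum_split[OF a] by simp
    have hu: "u t = x a u * e a t + (\<Sum>i\<in>?R. x i u * e i t)"
      using bpair_recp[OF b, of u t] sum_split[OF a] by simp
    have "(\<Sum>i=1..d. (if i = a then (\<lambda>v. ?k * x a v) else (\<lambda>v. x i v + (- (x i u * ?k)) * x a v)) v * (e(a := u)) i t)
       = ?k * x a v * u t + (\<Sum>i\<in>?R. (x i v + (- (x i u * ?k)) * x a v) * e i t)"
      by (subst sum_split[OF a]) (simp cong: sum.cong_simp)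
    also have "(\<Sum>i\<in>?R. (x i v + (- (x i u * ?k)) * x a v) * e i t)
       = (\<Sum>i\<in>?R. x i v * e i t) - ?k * x a v * (\<Sum>i\<in>?R. x i u * e i t)"
      by (simp add: algebra_simps sum.distrib sum_distrib_left sum_subtractf)
    also have "?k * x a v * u t + ((\<Sum>i\<in>?R. x i v * e i t) - ?k * x a v * (\<Sum>i\<in>?R. x i u * e i t)) = v t"
      unfolding hu hv using u by (simp add: field_simps)
    finally show "v t = (\<Sum>i=1..d. (if i = a then (\<lambda>v. ?k * x a v) else (\<lambda>v. x i v + (- (x i u * ?k)) * x a v)) v * (e(a := u)) i t)"
      by simp
  qed
next
  fix i j assume i: "i \<in> {1..d}" and j: "j \<in> {1..d}"
  show "(if i = a then (\<lambda>v. inverse (x a u) * x a v) else (\<lambda>v. x i v + (- (x i u * inverse (x a u))) * x a v)) ((e(a := u)) j)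
     = (if i = j then 1 else 0)"
    using bpair_dual[OF b i j] bpair_dual[OF b a j] u by auto
qed

lemma bpair_shear:
  assumes b: "bpair d e x" and a: "a \<in> {1..d}"
  shows "bpair d (\<lambda>j. if j = a then e a else (\<lambda>t. e j t + (- c j) * e a t))
     (\<lambda>i. if i = a then (\<lambda>v. x a v + (\<Sum>j\<in>{1..d}-{a}. c j * x j v)) else x i)"
  unfolding bpair_def
proof (intro conjI ballI allI)
  fix i assume i: "i \<in> {1..d}"
  have ls: "lin_fun (\<lambda>v. \<Sum>j\<in>{1..d}-{a}. c j * x j v)"
    by (rule lin_fun_sumc) (auto intro: bpair_lin[OF b])
  show "lin_fun (if i = a then (\<lambda>v. x a v + (\<Sum>j\<in>{1..d}-{a}. c j * x j v)) else x i)"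
  proof (cases "i = a")
    case True show ?thesis unfolding if_P[OF True] by (rule lin_fun_add[OF bpair_lin[OF b a] ls])
  next
    case False show ?thesis unfolding if_not_P[OF False] by (rule bpair_lin[OF b i])
  qed
next
  fix v :: "'a \<Rightarrow> 'b"
  let ?R = "{1..d} - {a}"
  show "v = (\<lambda>t. \<Sum>i=1..d. (if i = a then (\<lambda>v. x a v + (\<Sum>j\<in>?R. c j * x j v)) else x i) v *
      (if i = a then e a else (\<lambda>t. e i t + (- c i) * e a t)) t)"
  proof
    fix t
    have hv: "v t = x a v * e a t + (\<Sum>i\<in>?R. x i v * e i t)"
      using bpair_recp[OF b, of v t] sum_split[OF a] by simp
    have "(\<Sum>i=1..d. (if i = a then (\<lambda>v. x a v + (\<Sum>j\<in>?R. c j * x j v)) else x i) v *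
      (if i = a then e a else (\<lambda>t. e i t + (- c i) * e a t)) t)
      = (x a v + (\<Sum>j\<in>?R. c j * x j v)) * e a t + (\<Sum>i\<in>?R. x i v * (e i t + (- c i) * e a t))"
      by (subst sum_split[OF a]) (simp cong: sum.cong_simp)
    also have "\<dots> = x a v * e a t + (\<Sum>i\<in>?R. x i v * e i t)"
      by (simp add: algebra_simps sum.distrib sum_distrib_left sum_distrib_right sum_subtractf)
    finally show "v t = (\<Sum>i=1..d. (if i = a then (\<lambda>v. x a v + (\<Sum>j\<in>?R. c j * x j v)) else x i) v *
      (if i = a then e a else (\<lambda>t. e i t + (- c i) * e a t)) t)"
      using hv by simp
  qed
next
  fix i j assume i: "i \<in> {1..d}" and j: "j \<in> {1..d}"
  let ?R = "{1..d} - {a}"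
  have xa0: "(\<Sum>k\<in>?R. c k * x k (e a)) = 0"
    by (rule sum.neutral) (auto simp: bpair_dual[OF b _ a])
  have lin2: "x k (\<lambda>t. e j t - c j * e a t) = x k (e j) - c j * x k (e a)" if "k \<in> {1..d}" for k
    using lin_add[OF bpair_lin[OF b that], of "e j" "\<lambda>t. (- c j) * e a t"]
          lin_sc[OF bpair_lin[OF b that], of "- c j" "e a"] by simp
  show "(if i = a then (\<lambda>v. x a v + (\<Sum>j\<in>?R. c j * x j v)) else x i)
      ((if j = a then e a else (\<lambda>t. e j t + (- c j) * e a t))) = (if i = j then 1 else 0)"
  proof (cases "j = a")
    case True
    then show ?thesis using xa0 bpair_dual[OF b i a] bpair_dual[OF b a a] by simp
  next
    case False
    have s: "(\<Sum>k\<in>?R. c k * x k (\<lambda>t. e j t + (- c j) * e a t)) = c j"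
    proof -
      have "(\<Sum>k\<in>?R. c k * x k (\<lambda>t. e j t + (- c j) * e a t)) = (\<Sum>k\<in>?R. if k = j then c k else 0)"
      proof (rule sum.cong)
        fix k assume "k \<in> ?R"
        then have k: "k \<in> {1..d}" "k \<noteq> a" by auto
        show "c k * x k (\<lambda>t. e j t + (- c j) * e a t) = (if k = j then c k else 0)"
          using lin2[OF k(1)] bpair_dual[OF b k(1) j] bpair_dual[OF b k(1) a] k(2) by simp
      qed simp
      also have "\<dots> = c j" using False j by simp
      finally show ?thesis .
    qed
    show ?thesis
    proof (cases "i = a")
      case True
      then show ?thesis using False s lin2[OF a] bpair_dual[OF b a j] bpair_dual[OF b a a] by simp
    next
      case False2: False
      then show ?thesis using False lin2[OF i] bpair_dual[OF b i j] bpair_dual[OF b i a] by simp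
    qed
  qed
qed


lemma sum_lt_split: "(\<Sum>j<m+(n::nat). f j) = (\<Sum>j<m. f j) + (\<Sum>j<n. (f (m+j) :: 'a::comm_monoid_add))"
  by (induction n) (simp_all add: add.assoc)

lemma Dsub_zero: "(\<lambda>us. 0) \<in> Dsub n W"
  unfolding Dsub_def by (rule CollectI, rule exI[of _ "[]"]) simp

lemma Dsub_add:
  assumes f: "f \<in> Dsub n W" and g: "g \<in> Dsub n W"
  shows "(\<lambda>us. f us + g us) \<in> Dsub n W"
proof -
  obtain gs1 cs1 where 1: "\<forall>g\<in>set gs1. \<exists>ps. set (map fst ps) \<subseteq> W \<and> sum_list (map snd ps) = n \<and> g = dmono ps"
     "f = (\<lambda>us. \<Sum>j<length gs1. cs1 j * (gs1 ! j) us)" using f unfolding Dsub_def by blast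
  obtain gs2 cs2 where 2: "\<forall>g\<in>set gs2. \<exists>ps. set (map fst ps) \<subseteq> W \<and> sum_list (map snd ps) = n \<and> g = dmono ps"
     "g = (\<lambda>us. \<Sum>j<length gs2. cs2 j * (gs2 ! j) us)" using g unfolding Dsub_def by blast
  let ?gs = "gs1 @ gs2"
  let ?cs = "\<lambda>j. if j < length gs1 then cs1 j else cs2 (j - length gs1)"
  have "(\<lambda>us. f us + g us) = (\<lambda>us. \<Sum>j<length ?gs. ?cs j * (?gs ! j) us)"
  proof
    fix us
    have "(\<Sum>j<length ?gs. ?cs j * (?gs ! j) us) =
       (\<Sum>j<length gs1. ?cs j * (?gs ! j) us) + (\<Sum>j<length gs2. ?cs (length gs1 + j) * (?gs ! (length gs1 + j)) us)"
      by (simp add: sum_lt_split)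
    also have "\<dots> = f us + g us"
      by (simp add: 1 2 nth_append)
    finally show "f us + g us = (\<Sum>j<length ?gs. ?cs j * (?gs ! j) us)" by simp
  qed
  moreover have "\<forall>g\<in>set ?gs. \<exists>ps. set (map fst ps) \<subseteq> W \<and> sum_list (map snd ps) = n \<and> g = dmono ps"
    unfolding set_append ball_Un using 1(1) 2(1) by (intro conjI)
  ultimately show ?thesis unfolding Dsub_def by (intro CollectI exI[of _ ?gs] exI[of _ ?cs] conjI)
qed

lemma Dsub_smult:
  assumes f: "f \<in> Dsub n W"
  shows "(\<lambda>us. k * f us) \<in> Dsub n W"
proof -
  obtain gs1 cs1 where 1: "\<forall>g\<in>set gs1. \<exists>ps. set (map fst ps) \<subseteq> W \<and> sum_list (map snd ps) = n \<and> g = dmono ps"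
     "f = (\<lambda>us. \<Sum>j<length gs1. cs1 j * (gs1 ! j) us)" using f unfolding Dsub_def by blast
  have "(\<lambda>us. k * f us) = (\<lambda>us. \<Sum>j<length gs1. (k * cs1 j) * (gs1 ! j) us)"
    unfolding 1(2) by (simp add: sum_distrib_left mult.assoc)
  then show ?thesis unfolding Dsub_def using 1(1) by (intro CollectI exI[of _ gs1] exI[of _ "\<lambda>j. k * cs1 j"] conjI)
qed

lemma Dsub_mono:
  assumes "set (map fst ps) \<subseteq> W" "sum_list (map snd ps) = n"
  shows "dmono ps \<in> Dsub n W"
proof -
  have "dmono ps = (\<lambda>us. \<Sum>j<length [dmono ps]. (\<lambda>_. 1) j * ([dmono ps] ! j) us)" by simp
  then show ?thesis unfolding Dsub_def using assms
    by (intro CollectI exI[of _ "[dmono ps]"] exI[of _ "\<lambda>_. 1"] conjI) auto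
qed

lemma swap_aux: fixes H :: "'s \<Rightarrow> 'a::comm_ring_1" shows "(\<Sum>S\<in>A. H S * (\<Sum>j<l. cs j * G j S)) = (\<Sum>j<l. cs j * (\<Sum>S\<in>A. H S * G j S))"
proof -
  have "(\<Sum>S\<in>A. H S * (\<Sum>j<l. cs j * G j S)) = (\<Sum>S\<in>A. \<Sum>j<l. cs j * (H S * G j S))"
    by (simp add: sum_distrib_left mult.left_commute)
  also have "\<dots> = (\<Sum>j<l. \<Sum>S\<in>A. cs j * (H S * G j S))" by (rule sum.swap)
  also have "\<dots> = (\<Sum>j<l. cs j * (\<Sum>S\<in>A. H S * G j S))" by (simp add: sum_distrib_left)
  finally show ?thesis .
qed

lemma dmult_lin2: "dmult p q h (\<lambda>us. \<Sum>j<l. cs j * G j us) = (\<lambda>us. \<Sum>j<l. cs j * dmult p q h (G j) us)"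
proof
  fix us
  show "dmult p q h (\<lambda>us. \<Sum>j<l. cs j * G j us) us = (\<Sum>j<l. cs j * dmult p q h (G j) us)"
    unfolding dmult_def
    using swap_aux[where H="\<lambda>S. h (nths us S)" and l=l and cs=cs and G="\<lambda>j S. G j (nths us ({0..<p+q} - S))" and A="{S. S \<subseteq> {0..<p+q} \<and> card S = p}"]
    by simp
qed

lemma dmult_smult2: "dmult p q h (\<lambda>us. k * g us) us = k * dmult p q h g us"
  unfolding dmult_def by (simp add: sum_distrib_left mult.left_commute)

lemma Dsub_mult1:
  assumes v: "v \<in> W" and f: "f \<in> Dsub 2 W"
  shows "dmult 1 2 (dpow v 1) f \<in> Dsub 3 W"
proof -
  obtain gs1 cs1 where 1: "\<forall>g\<in>set gs1. \<exists>ps. set (map fst ps) \<subseteq> W \<and> sum_list (map snd ps) = 2 \<and> g = dmono ps"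
     "f = (\<lambda>us. \<Sum>j<length gs1. cs1 j * (gs1 ! j) us)" using f unfolding Dsub_def by blast
  let ?gs = "map (\<lambda>g. dmult 1 2 (dpow v 1) g) gs1"
  have "dmult 1 2 (dpow v 1) f = (\<lambda>us. \<Sum>j<length gs1. cs1 j * dmult 1 2 (dpow v 1) (gs1 ! j) us)"
    unfolding 1 by (rule dmult_lin2)
  also have "\<dots> = (\<lambda>us. \<Sum>j<length ?gs. cs1 j * (?gs ! j) us)" by simp
  finally have e: "dmult 1 2 (dpow v 1) f = (\<lambda>us. \<Sum>j<length ?gs. cs1 j * (?gs ! j) us)" .
  have "\<forall>g\<in>set ?gs. \<exists>ps. set (map fst ps) \<subseteq> W \<and> sum_list (map snd ps) = 3 \<and> g = dmono ps"
  proof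
    fix g assume "g \<in> set ?gs"
    then obtain g0 where g0: "g0 \<in> set gs1" "g = dmult 1 2 (dpow v 1) g0" by auto
    then obtain ps where ps: "set (map fst ps) \<subseteq> W" "sum_list (map snd ps) = 2" "g0 = dmono ps" using 1 by blast
    have "g = dmono ((v,1) # ps)" using g0 ps by simp
    moreover have "set (map fst ((v,1) # ps)) \<subseteq> W" using ps v by simp
    moreover have "sum_list (map snd ((v,1) # ps)) = 3" using ps by simp
    ultimately show "\<exists>ps. set (map fst ps) \<subseteq> W \<and> sum_list (map snd ps) = 3 \<and> g = dmono ps" by blast
  qed
  then show ?thesis unfolding Dsub_def using e by (intro CollectI exI[of _ ?gs] exI[of _ cs1] conjI)
qed


lemma dmono_11f: "dmono [(v,1),(w,1)] = dmult 1 1 (dpow v 1) (dpow w 1)"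
proof -
  have "dmono [(v,1),(w,1)] = dmult 1 (sum_list (map snd [(w,1)])) (dpow v 1) (dmono [(w,1)])"
    by (rule dmono.simps(2))
  also have "\<dots> = dmult 1 1 (dpow v 1) (dpow w 1)" by (simp only: dmono_single) simp
  finally show ?thesis .
qed

lemma dmono_21f: "dmono [(v,2),(w,1)] = dmult 2 1 (dpow v 2) (dpow w 1)"
proof -
  have "dmono [(v,2),(w,1)] = dmult 2 (sum_list (map snd [(w,1)])) (dpow v 2) (dmono [(w,1)])"
    by (rule dmono.simps(2))
  also have "\<dots> = dmult 2 1 (dpow v 2) (dpow w 1)" by (simp only: dmono_single) simp
  finally show ?thesis .
qed

lemma length2: "length us = 2 \<Longrightarrow> \<exists>b c. us = [b,c]"
  by (auto simp: numeral_2_eq_2 length_Suc_conv)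

definition PS :: "nat set \<Rightarrow> (nat \<Rightarrow> 'n \<Rightarrow> 'a::field) \<Rightarrow> (nat \<Rightarrow> ('n \<Rightarrow> 'a) \<Rightarrow> 'a) \<Rightarrow> ('n \<Rightarrow> 'a) \<Rightarrow> 'n \<Rightarrow> 'a" where
  "PS S e x v = (\<lambda>t. \<Sum>j\<in>S. x j v * e j t)"

lemma PS_empty: "PS {} e x v = (\<lambda>t. 0)" by (simp add: PS_def)
lemma PS_insert: "finite S \<Longrightarrow> k \<notin> S \<Longrightarrow> PS (insert k S) e x v = (\<lambda>t. x k v * e k t + PS S e x v t)"
  by (simp add: PS_def)

lemma span_S:
  assumes "S \<subseteq> {2..d}"
  shows "(\<lambda>u. \<Sum>j\<in>S. k j * x j u) \<in> span_from2 d x"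
proof -
  have "(\<lambda>u. \<Sum>j\<in>S. k j * x j u) = (\<lambda>u. \<Sum>j=2..d. (if j \<in> S then k j else 0) * x j u)"
  proof
    fix u
    have "(\<Sum>j=2..d. (if j \<in> S then k j else 0) * x j u) = (\<Sum>j=2..d. if j \<in> S then k j * x j u else 0)"
      by (rule sum.cong) auto
    also have "\<dots> = (\<Sum>j\<in>{2..d} \<inter> S. k j * x j u)" by (rule sum.inter_restrict[symmetric]) simp
    also have "{2..d} \<inter> S = S" using assms by auto
    finally show "(\<Sum>j\<in>S. k j * x j u) = (\<Sum>j=2..d. (if j \<in> S then k j else 0) * x j u)" by simp
  qed
  then show ?thesis unfolding span_from2_def by (intro CollectI exI[of _ "\<lambda>j. if j \<in> S then k j else 0"])
qed

lemma span_x: "j \<in> {2..d} \<Longrightarrow> x j \<in> span_from2 d x"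
  using span_S[of "{j}" d "\<lambda>_. 1" x] by simp

context tri
begin

lemma zero2: "phi [a, (\<lambda>t. 0), c] = 0"
  using sc2[of a 0 a c] by simp
lemma zero3: "phi [a, b, (\<lambda>t. 0)] = 0"
  using sc3[of a b 0 a] by simp

lemma exp4: "phi [z, (\<lambda>t. \<beta> * e t + B t), (\<lambda>t. \<gamma> * e t + C t)] =
   phi [z,B,C] + \<beta> * phi [z,e,C] + \<gamma> * phi [z,B,e] + \<beta> * \<gamma> * phi [z,e,e]"
  by (simp add: add2 add3 sc2 sc3 algebra_simps)

lemma claim2:
  assumes "finite S" "S \<subseteq> {2..d}"
  shows "(\<lambda>us. if length us = 2 then phi [z, PS S e x (us!0), PS S e x (us!1)] else 0) \<in> Dsub 2 (span_from2 d x)"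
  using assms
proof (induction S rule: finite_induct)
  case empty
  have "(\<lambda>us. if length us = 2 then phi [z, PS {} e x (us!0), PS {} e x (us!1)] else 0) = (\<lambda>us. 0)"
    by (rule ext) (simp add: PS_empty zero2)
  then show ?case using Dsub_zero by metis
next
  case (insert k S)
  let ?F = "\<lambda>us. if length us = 2 then phi [z, PS S e x (us!0), PS S e x (us!1)] else 0"
  let ?M = "\<lambda>c. \<Sum>j\<in>S. phi [z, e k, e j] * x j c"
  have k: "k \<in> {2..d}" and S: "S \<subseteq> {2..d}" using insert by auto
  have IH: "?F \<in> Dsub 2 (span_from2 d x)" using insert S by blast
  have M: "?M \<in> span_from2 d x" by (rule span_S[OF S])
  have xk: "x k \<in> span_from2 d x" by (rule span_x[OF k])
  have Mv: "?M v = phi [z, e k, PS S e x v]" for v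
    unfolding PS_def sumsc3[OF insert(1)] by (simp add: mult.commute)
  have eq: "(\<lambda>us. if length us = 2 then phi [z, PS (insert k S) e x (us!0), PS (insert k S) e x (us!1)] else 0)
     = (\<lambda>us. (\<lambda>us. ?F us + dmono [(x k,1),(?M,1)] us) us + phi [z, e k, e k] * dmono [(x k,2)] us)"
  proof
    fix us
    show "(if length us = 2 then phi [z, PS (insert k S) e x (us!0), PS (insert k S) e x (us!1)] else 0)
      = (\<lambda>us. ?F us + dmono [(x k,1),(?M,1)] us) us + phi [z, e k, e k] * dmono [(x k,2)] us"
    proof (cases "length us = 2")
      case True
      then obtain b c where us: "us = [b,c]" using length2 by blast
      have ex: "phi [z, PS (insert k S) e x b, PS (insert k S) e x c] = phi [z, PS S e x b, PS S e x c]
        + x k b * phi [z, e k, PS S e x c] + x k c * phi [z, PS S e x b, e k] + x k b * x k c * phi [z, e k, e k]"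
        unfolding PS_insert[OF insert(1,2)] by (rule exp4)
      show ?thesis
        unfolding us dmono_11 dmono_single Mv using ex sym23[of z "PS S e x b" "e k"]
        by (simp add: dpow_def algebra_simps)
    next
      case False
      then show ?thesis unfolding dmono_11f dmono_single by (simp add: dpow_def dmult_off)
    qed
  qed
  show ?case unfolding eq
    by (intro Dsub_add Dsub_smult IH Dsub_mono) (use M xk in auto)
qed

end


context tri
begin

lemma claim3:
  assumes "finite S" "S \<subseteq> {2..d}"
  shows "(\<lambda>us. if length us = 3 then phi [PS S e x (us!0), PS S e x (us!1), PS S e x (us!2)] else 0) \<in> Dsub 3 (span_from2 d x)"
  using assms
proof (induction S rule: finite_induct)
  case empty
  have "(\<lambda>us. if length us = 3 then phi [PS {} e x (us!0), PS {} e x (us!1), PS {} e x (us!2)] else 0) = (\<lambda>us. 0)"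
    by (rule ext) (simp add: PS_empty zero2)
  then show ?case using Dsub_zero by metis
next
  case (insert k S)
  let ?F = "\<lambda>us. if length us = 3 then phi [PS S e x (us!0), PS S e x (us!1), PS S e x (us!2)] else 0"
  let ?Q = "\<lambda>us. if length us = 2 then phi [e k, PS S e x (us!0), PS S e x (us!1)] else 0"
  let ?L = "\<lambda>c. \<Sum>j\<in>S. phi [e k, e k, e j] * x j c"
  have k: "k \<in> {2..d}" and S: "S \<subseteq> {2..d}" using insert by auto
  have IH: "?F \<in> Dsub 3 (span_from2 d x)" using insert S by blast
  have Q: "?Q \<in> Dsub 2 (span_from2 d x)" by (rule claim2[OF insert(1) S])
  have L: "?L \<in> span_from2 d x" by (rule span_S[OF S])
  have xk: "x k \<in> span_from2 d x" by (rule span_x[OF k])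
  have Lv: "?L v = phi [e k, e k, PS S e x v]" for v
    unfolding PS_def sumsc3[OF insert(1)] by (simp add: mult.commute)
  have eq: "(\<lambda>us. if length us = 3 then phi [PS (insert k S) e x (us!0), PS (insert k S) e x (us!1), PS (insert k S) e x (us!2)] else 0)
     = (\<lambda>us. (\<lambda>us. (\<lambda>us. ?F us + dmult 1 2 (dpow (x k) 1) ?Q us) us + dmono [(x k,2),(?L,1)] us) us
            + phi [e k, e k, e k] * dmono [(x k,3)] us)"
  proof
    fix us
    show "(if length us = 3 then phi [PS (insert k S) e x (us!0), PS (insert k S) e x (us!1), PS (insert k S) e x (us!2)] else 0)
      = (\<lambda>us. (\<lambda>us. ?F us + dmult 1 2 (dpow (x k) 1) ?Q us) us + dmono [(x k,2),(?L,1)] us) us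
            + phi [e k, e k, e k] * dmono [(x k,3)] us"
    proof (cases "length us = 3")
      case True
      then obtain a b c where us: "us = [a,b,c]" using length3 by blast
      let ?A = "PS S e x a" and ?B = "PS S e x b" and ?C = "PS S e x c" and ?e = "e k"
      have ex: "phi [PS (insert k S) e x a, PS (insert k S) e x b, PS (insert k S) e x c] =
         phi [?A,?B,?C] + x k a * phi [?e,?B,?C] + x k b * phi [?A,?e,?C] + x k c * phi [?A,?B,?e]
         + x k a * x k b * phi [?e,?e,?C] + x k a * x k c * phi [?e,?B,?e] + x k b * x k c * phi [?A,?e,?e]
         + x k a * x k b * x k c * phi [?e,?e,?e]"
        unfolding PS_insert[OF insert(1,2)] by (rule exp8)
      have s1: "phi [?A,?e,?C] = phi [?e,?A,?C]" by (rule sym12)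
      have s2: "phi [?A,?B,?e] = phi [?e,?A,?B]" using sym13[of ?A ?B ?e] sym23[of ?e ?B ?A] by simp
      have s3: "phi [?e,?B,?e] = phi [?e,?e,?B]" by (rule sym23)
      have s4: "phi [?A,?e,?e] = phi [?e,?e,?A]" by (rule sym13)
      show ?thesis
        unfolding us dmult12 dmono_21 dmono_single Lv using ex s1 s2 s3 s4
        by (simp add: dpow_def algebra_simps)
    next
      case False
      then show ?thesis unfolding dmono_21f dmono_single by (simp add: dpow_def dmult_off)
    qed
  qed
  show ?case unfolding eq
    by (intro Dsub_add Dsub_smult IH Dsub_mono Dsub_mult1 xk Q) (use L xk in auto)
qed

end


lemma dm3: "dmult 1 2 (dpow f 1) (dmult 1 1 (dpow g 1) (dpow h 1)) [a,b,c] =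
   f a * (g b * h c + g c * h b) + f b * (g a * h c + g c * h a) + f c * (g a * h b + g b * h a)"
  unfolding dmult12 dmult11 by (simp add: dpow_def)

lemma pairs_Suc: "{(i,j). 1 \<le> i \<and> i < j \<and> j \<le> Suc m} = {(i,j). 1 \<le> i \<and> i < j \<and> j \<le> m} \<union> (\<lambda>i. (i, Suc m)) ` {1..m}"
  by auto

lemma pairs_fin: "finite {(i,j). 1 \<le> i \<and> i < j \<and> j \<le> (m::nat)}"
  by (rule finite_subset[of _ "{1..m} \<times> {1..m}"]) auto

lemma triples_Suc: "{(i,j,l). 1 \<le> i \<and> i < j \<and> j < l \<and> l \<le> Suc m} =
   {(i,j,l). 1 \<le> i \<and> i < j \<and> j < l \<and> l \<le> m} \<union> (\<lambda>(i,j). (i, j, Suc m)) ` {(i,j). 1 \<le> i \<and> i < j \<and> j \<le> m}"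
proof (intro equalityI subsetI)
  fix t assume "t \<in> {(i,j,l). 1 \<le> i \<and> i < j \<and> j < l \<and> l \<le> Suc m}"
  then obtain i j l where t: "t = (i,j,l)" "1 \<le> i" "i < j" "j < l" "l \<le> Suc m" by auto
  show "t \<in> {(i,j,l). 1 \<le> i \<and> i < j \<and> j < l \<and> l \<le> m} \<union> (\<lambda>(i,j). (i, j, Suc m)) ` {(i,j). 1 \<le> i \<and> i < j \<and> j \<le> m}"
  proof (cases "l \<le> m")
    case True then show ?thesis using t by auto
  next
    case False
    then have "l = Suc m" using t by auto
    then have "t = (\<lambda>(i,j). (i, j, Suc m)) (i,j)" "(i,j) \<in> {(i,j). 1 \<le> i \<and> i < j \<and> j \<le> m}" using t by auto
    then show ?thesis by blast
  qed
qed auto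

lemma triples_fin: "finite {(i,j,l). 1 \<le> i \<and> i < j \<and> j < l \<and> l \<le> (m::nat)}"
  by (rule finite_subset[of _ "{1..m} \<times> {1..m} \<times> {1..m}"]) auto

context tri
begin

lemma decomp:
  assumes B: "bpair d e x" and d: "1 \<le> d"
  shows "phi = (\<lambda>us. phi [e 1, e 1, e 1] * dpow (x 1) 3 us
     + dmono [(x 1, 2), (\<lambda>c. phi [e 1, e 1, PS {2..d} e x c], 1)] us
     + dmult 1 2 (dpow (x 1) 1) (\<lambda>us. if length us = 2 then phi [e 1, PS {2..d} e x (us!0), PS {2..d} e x (us!1)] else 0) us
     + (\<lambda>us. if length us = 3 then phi [PS {2..d} e x (us!0), PS {2..d} e x (us!1), PS {2..d} e x (us!2)] else 0) us)"
proof
  fix us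
  have rec1: "(\<lambda>t. x 1 v * e 1 t + PS {2..d} e x v t) = v" for v
  proof
    fix t
    have "v t = (\<Sum>i=1..d. x i v * e i t)" by (rule bpair_recp[OF B])
    also have "\<dots> = x 1 v * e 1 t + (\<Sum>i=Suc 1..d. x i v * e i t)" by (rule sum.atLeast_Suc_atMost[OF d])
    finally show "x 1 v * e 1 t + PS {2..d} e x v t = v t" by (simp add: PS_def numeral_2_eq_2)
  qed
  show "phi us = (\<lambda>us. phi [e 1, e 1, e 1] * dpow (x 1) 3 us
     + dmono [(x 1, 2), (\<lambda>c. phi [e 1, e 1, PS {2..d} e x c], 1)] us
     + dmult 1 2 (dpow (x 1) 1) (\<lambda>us. if length us = 2 then phi [e 1, PS {2..d} e x (us!0), PS {2..d} e x (us!1)] else 0) us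
     + (\<lambda>us. if length us = 3 then phi [PS {2..d} e x (us!0), PS {2..d} e x (us!1), PS {2..d} e x (us!2)] else 0) us) us"
  proof (cases "length us = 3")
    case True
    then obtain a b c where us: "us = [a,b,c]" using length3 by blast
    let ?A = "PS {2..d} e x a" and ?B = "PS {2..d} e x b" and ?C = "PS {2..d} e x c" and ?e = "e 1"
    have "phi [a,b,c] = phi [(\<lambda>t. x 1 a * e 1 t + PS {2..d} e x a t), (\<lambda>t. x 1 b * e 1 t + PS {2..d} e x b t),
       (\<lambda>t. x 1 c * e 1 t + PS {2..d} e x c t)]" by (simp only: rec1)
    also have "\<dots> = phi [?A,?B,?C] + x 1 a * phi [?e,?B,?C] + x 1 b * phi [?A,?e,?C] + x 1 c * phi [?A,?B,?e]
         + x 1 a * x 1 b * phi [?e,?e,?C] + x 1 a * x 1 c * phi [?e,?B,?e] + x 1 b * x 1 c * phi [?A,?e,?e]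
         + x 1 a * x 1 b * x 1 c * phi [?e,?e,?e]" by (rule exp8)
    finally have ex: "phi [a,b,c] = \<dots>" .
    have s1: "phi [?A,?e,?C] = phi [?e,?A,?C]" by (rule sym12)
    have s2: "phi [?A,?B,?e] = phi [?e,?A,?B]" using sym13[of ?A ?B ?e] sym23[of ?e ?B ?A] by simp
    have s3: "phi [?e,?B,?e] = phi [?e,?e,?B]" by (rule sym23)
    have s4: "phi [?A,?e,?e] = phi [?e,?e,?A]" by (rule sym13)
    show ?thesis
      unfolding us dmult12 dmono_21 using ex s1 s2 s3 s4
      by (simp add: dpow_def algebra_simps)
  next
    case False
    then show ?thesis unfolding dmono_21f by (simp add: dpow_def dmult_off off)
  qed
qed

lemma alt2:
  assumes alt: "\<forall>u v. phi [u,u,v] = 0"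
  shows "phi [z, PS {1..m} e x b, PS {1..m} e x c] =
    (\<Sum>(i,j)\<in>{(i,j). 1 \<le> i \<and> i < j \<and> j \<le> m}. phi [z, e i, e j] * (x i b * x j c + x j b * x i c))"
proof (induction m)
  case 0
  have e0: "{(i,j). 1 \<le> i \<and> i < j \<and> j \<le> (0::nat)} = {}" by auto
  show ?case unfolding e0 by (simp add: PS_empty zero2)
next
  case (Suc m)
  let ?E = "e (Suc m)" and ?B = "PS {1..m} e x b" and ?C = "PS {1..m} e x c"
  have ins: "{1..Suc m} = insert (Suc m) {1..m}" by auto
  have nin: "Suc m \<notin> {1..m}" by simp
  have ex: "phi [z, PS {1..Suc m} e x b, PS {1..Suc m} e x c] = phi [z,?B,?C] + x (Suc m) b * phi [z,?E,?C]
     + x (Suc m) c * phi [z,?B,?E] + x (Suc m) b * x (Suc m) c * phi [z,?E,?E]"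
    unfolding ins PS_insert[OF finite_atLeastAtMost nin] by (rule exp4)
  have zz: "phi [z,?E,?E] = 0" using alt sym13[of z ?E ?E] by simp
  have c1: "phi [z,?E,?C] = (\<Sum>i=1..m. x i c * phi [z, e i, ?E])"
    unfolding PS_def sumsc3[OF finite_atLeastAtMost] by (rule sum.cong) (simp_all add: sym23[of z ?E])
  have c2: "phi [z,?B,?E] = (\<Sum>i=1..m. x i b * phi [z, e i, ?E])"
    unfolding PS_def sumsc2[OF finite_atLeastAtMost] by simp
  have dis: "{(i,j). 1 \<le> i \<and> i < j \<and> j \<le> m} \<inter> (\<lambda>i. (i, Suc m)) ` {1..m} = {}" by auto
  have inj: "inj_on (\<lambda>i. (i, Suc m)) {1..m}" by (auto simp: inj_on_def)
  have "(\<Sum>(i,j)\<in>{(i,j). 1 \<le> i \<and> i < j \<and> j \<le> Suc m}. phi [z, e i, e j] * (x i b * x j c + x j b * x i c))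
     = (\<Sum>(i,j)\<in>{(i,j). 1 \<le> i \<and> i < j \<and> j \<le> m}. phi [z, e i, e j] * (x i b * x j c + x j b * x i c))
       + (\<Sum>i=1..m. phi [z, e i, ?E] * (x i b * x (Suc m) c + x (Suc m) b * x i c))"
    unfolding pairs_Suc sum.union_disjoint[OF pairs_fin finite_imageI[OF finite_atLeastAtMost] dis] sum.reindex[OF inj]
    by simp
  also have "(\<Sum>i=1..m. phi [z, e i, ?E] * (x i b * x (Suc m) c + x (Suc m) b * x i c))
     = x (Suc m) c * (\<Sum>i=1..m. x i b * phi [z, e i, ?E]) + x (Suc m) b * (\<Sum>i=1..m. x i c * phi [z, e i, ?E])"
    by (simp add: sum_distrib_left sum.distrib[symmetric] algebra_simps)
  finally show ?case using ex zz c1 c2 Suc.IH by (simp add: algebra_simps)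
qed

end


lemma dm3s: "dmult (Suc 0) 2 (dpow f (Suc 0)) (dmult (Suc 0) (Suc 0) (dpow g (Suc 0)) (dpow h (Suc 0))) [a,b,c] =
   f a * (g b * h c + g c * h b) + f b * (g a * h c + g c * h a) + f c * (g a * h b + g b * h a)"
  using dm3[of f g h a b c] by simp

context tri
begin

lemma alt3:
  assumes alt: "\<forall>u v. phi [u,u,v] = 0"
  shows "phi [PS {1..m} e x a, PS {1..m} e x b, PS {1..m} e x c] =
    (\<Sum>(i,j,l)\<in>{(i,j,l). 1 \<le> i \<and> i < j \<and> j < l \<and> l \<le> m}.
       phi [e i, e j, e l] * dmult 1 2 (dpow (x i) 1) (dmult 1 1 (dpow (x j) 1) (dpow (x l) 1)) [a,b,c])"
proof (induction m)
  case 0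
  have e0: "{(i,j,l). 1 \<le> i \<and> i < j \<and> j < l \<and> l \<le> (0::nat)} = {}" by auto
  show ?case unfolding e0 by (simp add: PS_empty zero1)
next
  case (Suc m)
  let ?E = "e (Suc m)" and ?A = "PS {1..m} e x a" and ?B = "PS {1..m} e x b" and ?C = "PS {1..m} e x c"
  let ?P = "{(i,j). 1 \<le> i \<and> i < j \<and> j \<le> m}"
  let ?T = "{(i,j,l). 1 \<le> i \<and> i < j \<and> j < l \<and> l \<le> m}"
  have ins: "{1..Suc m} = insert (Suc m) {1..m}" by auto
  have nin: "Suc m \<notin> {1..m}" by simp
  have ex: "phi [PS {1..Suc m} e x a, PS {1..Suc m} e x b, PS {1..Suc m} e x c] =
         phi [?A,?B,?C] + x (Suc m) a * phi [?E,?B,?C] + x (Suc m) b * phi [?A,?E,?C] + x (Suc m) c * phi [?A,?B,?E]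
         + x (Suc m) a * x (Suc m) b * phi [?E,?E,?C] + x (Suc m) a * x (Suc m) c * phi [?E,?B,?E]
         + x (Suc m) b * x (Suc m) c * phi [?A,?E,?E] + x (Suc m) a * x (Suc m) b * x (Suc m) c * phi [?E,?E,?E]"
    unfolding ins PS_insert[OF finite_atLeastAtMost nin] by (rule exp8)
  have z1: "phi [?E,?E,?C] = 0" "phi [?E,?E,?E] = 0" using alt by auto
  have z2: "phi [?E,?B,?E] = 0" using alt sym23[of ?E ?B ?E] by simp
  have z3: "phi [?A,?E,?E] = 0" using alt sym13[of ?A ?E ?E] by simp
  have s1: "phi [?A,?E,?C] = phi [?E,?A,?C]" by (rule sym12)
  have s2: "phi [?A,?B,?E] = phi [?E,?A,?B]" using sym13[of ?A ?B ?E] sym23[of ?E ?B ?A] by simp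
  have X: "phi [?E,?B,?C] = (\<Sum>(i,j)\<in>?P. phi [?E, e i, e j] * (x i b * x j c + x j b * x i c))"
    by (rule alt2[OF alt])
  have Y: "phi [?E,?A,?C] = (\<Sum>(i,j)\<in>?P. phi [?E, e i, e j] * (x i a * x j c + x j a * x i c))"
    by (rule alt2[OF alt])
  have Z: "phi [?E,?A,?B] = (\<Sum>(i,j)\<in>?P. phi [?E, e i, e j] * (x i a * x j b + x j a * x i b))"
    by (rule alt2[OF alt])
  have dis: "?T \<inter> (\<lambda>(i,j). (i, j, Suc m)) ` ?P = {}" by auto
  have inj: "inj_on (\<lambda>(i,j). (i, j, Suc m)) ?P" by (auto simp: inj_on_def)
  let ?G = "\<lambda>(i,j,l). phi [e i, e j, e l] * dmult 1 2 (dpow (x i) 1) (dmult 1 1 (dpow (x j) 1) (dpow (x l) 1)) [a,b,c]"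
  have split: "sum ?G {(i,j,l). 1 \<le> i \<and> i < j \<and> j < l \<and> l \<le> Suc m} = sum ?G ?T + sum (?G \<circ> (\<lambda>(i,j). (i, j, Suc m))) ?P"
    unfolding triples_Suc sum.union_disjoint[OF triples_fin finite_imageI[OF pairs_fin] dis] sum.reindex[OF inj] by simp
  let ?fX = "\<lambda>(i,j). phi [?E, e i, e j] * (x i b * x j c + x j b * x i c)"
  let ?fY = "\<lambda>(i,j). phi [?E, e i, e j] * (x i a * x j c + x j a * x i c)"
  let ?fZ = "\<lambda>(i,j). phi [?E, e i, e j] * (x i a * x j b + x j a * x i b)"
  have sE: "phi [e i, e j, ?E] = phi [?E, e i, e j]" for i j
    using sym13[of "e i" "e j" ?E] sym23[of ?E "e j" "e i"] by simp
  have "sum (?G \<circ> (\<lambda>(i,j). (i, j, Suc m))) ?P = (\<Sum>p\<in>?P. x (Suc m) a * ?fX p + x (Suc m) b * ?fY p + x (Suc m) c * ?fZ p)"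
    by (rule sum.cong) (auto simp: dm3 dm3s sE algebra_simps)
  also have "\<dots> = x (Suc m) a * sum ?fX ?P + x (Suc m) b * sum ?fY ?P + x (Suc m) c * sum ?fZ ?P"
    by (simp add: sum.distrib sum_distrib_left)
  finally have new: "sum (?G \<circ> (\<lambda>(i,j). (i, j, Suc m))) ?P = \<dots>" .
  show ?case
    unfolding split new ex Suc.IH z1 z2 z3 s1 s2 X Y Z by (simp add: algebra_simps)
qed

end


lemma get_basis_u:
  fixes e :: "nat \<Rightarrow> 'n \<Rightarrow> 'a::field" and u :: "'n \<Rightarrow> 'a"
  assumes B: "bpair d e x" and d: "1 \<le> d" and u: "u \<noteq> (\<lambda>t. 0)"
  shows "\<exists>e' x'. bpair d e' x' \<and> e' 1 = u"
proof -
  have "\<exists>i\<in>{1..d}. x i u \<noteq> 0"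
  proof (rule ccontr)
    assume "\<not> (\<exists>i\<in>{1..d}. x i u \<noteq> 0)"
    then have "\<forall>i\<in>{1..d}. x i u = 0" by blast
    then have "u = (\<lambda>t. 0)" using bpair_rec[OF B, of u] by simp
    with u show False by simp
  qed
  then obtain i where i: "i \<in> {1..d}" "x i u \<noteq> 0" by blast
  have one: "(1::nat) \<in> {1..d}" using d by simp
  have B2: "bpair d (\<lambda>k. e (sw i 1 k)) (\<lambda>k. x (sw i 1 k))" by (rule bpair_swap[OF B i(1) one])
  have s: "sw i 1 1 = i" by (simp add: sw_def)
  have x2: "(\<lambda>k. x (sw i 1 k)) 1 u \<noteq> 0" using i s by simp
  note B3 = bpair_exch[OF B2 one x2]
  show ?thesis by (rule exI, rule exI, rule conjI[OF B3]) simp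
qed

context tri
begin

lemma lam_lin: "lin_fun (\<lambda>v. phi [a,b,v])"
  unfolding lin_fun_def by (simp add: add3 sc3)

lemma u_nz: "phi [u,u,w] \<noteq> 0 \<Longrightarrow> u \<noteq> (\<lambda>t. 0)"
  using zero1[of "\<lambda>t. 0" w] by auto

lemma dmono_L0: "dmono [(v, 2), ((\<lambda>c. 0), 1)] us = 0"
proof (cases "length us = 3")
  case True
  then obtain a b c where us: "us = [a,b,c]" using length3 by blast
  show ?thesis unfolding us dmono_21 by simp
next
  case False
  then show ?thesis unfolding dmono_21f by (simp add: dmult_off)
qed

lemma caseA:
  fixes e0 :: "nat \<Rightarrow> 'n \<Rightarrow> 'a"
  assumes B0: "bpair d e0 x0" and d: "1 \<le> d" and u: "phi [u,u,u] \<noteq> 0"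
  shows "\<exists>alpha xs. alpha \<noteq> 0 \<and> is_dual_basis d xs \<and>
    (\<exists>phi20 phi30. phi20 \<in> Dsub 2 (span_from2 d xs) \<and> phi30 \<in> Dsub 3 (span_from2 d xs) \<and>
       (\<lambda>us. alpha * phi us) = (\<lambda>us. dpow (xs 1) 3 us + dmult 1 2 (dpow (xs 1) 1) phi20 us + phi30 us))"
proof -
  let ?K = "phi [u,u,u]"
  obtain e1 x1 where B1: "bpair d e1 x1" and e11: "e1 1 = u"
    using get_basis_u[OF B0 d u_nz[OF u]] by blast
  have one: "(1::nat) \<in> {1..d}" using d by simp
  define c where "c = (\<lambda>j. phi [u,u,e1 j] * inverse ?K)"
  define e where "e = (\<lambda>j. if j = 1 then e1 1 else (\<lambda>t. e1 j t + (- c j) * e1 1 t))"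
  define x where "x = (\<lambda>i. if i = 1 then (\<lambda>v. x1 1 v + (\<Sum>j\<in>{1..d}-{1}. c j * x1 j v)) else x1 i)"
  have B: "bpair d e x" unfolding e_def x_def by (rule bpair_shear[OF B1 one])
  have e1u: "e 1 = u" using e11 by (simp add: e_def)
  have ker: "phi [u,u,e j] = 0" if j: "j \<in> {2..d}" for j
  proof -
    have "e j = (\<lambda>t. e1 j t + (- c j) * u t)" using j e11 by (simp add: e_def)
    then have "phi [u,u,e j] = phi [u,u,e1 j] + (- c j) * ?K"
      using add3[of u u "e1 j" "\<lambda>t. (- c j) * u t"] sc3[of u u "- c j" u] by simp
    then show ?thesis using u by (simp add: c_def)
  qed
  have L0: "(\<lambda>c. phi [e 1, e 1, PS {2..d} e x c]) = (\<lambda>c. 0)"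
  proof
    fix v
    have "phi [e 1, e 1, PS {2..d} e x v] = (\<Sum>j\<in>{2..d}. x j v * phi [u, u, e j])"
      unfolding PS_def e1u by (rule sumsc3) simp
    also have "\<dots> = 0" using ker by simp
    finally show "phi [e 1, e 1, PS {2..d} e x v] = 0" .
  qed
  let ?Q = "\<lambda>us. if length us = 2 then phi [e 1, PS {2..d} e x (us!0), PS {2..d} e x (us!1)] else 0"
  let ?R = "\<lambda>us. if length us = 3 then phi [PS {2..d} e x (us!0), PS {2..d} e x (us!1), PS {2..d} e x (us!2)] else 0"
  have sub: "{2..d} \<subseteq> {2..d}" by simp
  have Q: "(\<lambda>us. inverse ?K * ?Q us) \<in> Dsub 2 (span_from2 d x)"
    by (rule Dsub_smult[OF claim2[OF finite_atLeastAtMost sub]])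
  have R: "(\<lambda>us. inverse ?K * ?R us) \<in> Dsub 3 (span_from2 d x)"
    by (rule Dsub_smult[OF claim3[OF finite_atLeastAtMost sub]])
  have dec: "phi = (\<lambda>us. phi [e 1, e 1, e 1] * dpow (x 1) 3 us
     + dmono [(x 1, 2), (\<lambda>c. phi [e 1, e 1, PS {2..d} e x c], 1)] us
     + dmult 1 2 (dpow (x 1) 1) ?Q us + ?R us)"
    by (rule decomp[OF B d])
  have eq: "(\<lambda>us. inverse ?K * phi us) = (\<lambda>us. dpow (x 1) 3 us + dmult 1 2 (dpow (x 1) 1) (\<lambda>us. inverse ?K * ?Q us) us + (\<lambda>us. inverse ?K * ?R us) us)"
  proof
    fix us
    have "phi us = ?K * dpow (x 1) 3 us + dmult 1 2 (dpow (x 1) 1) ?Q us + ?R us"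
      using fun_cong[OF dec[unfolded L0], of us] unfolding dmono_L0 by (simp add: dmono_L0 e1u del: dmono.simps, simp add: e1u[simplified])
    then show "inverse ?K * phi us = dpow (x 1) 3 us + dmult 1 2 (dpow (x 1) 1) (\<lambda>us. inverse ?K * ?Q us) us + (\<lambda>us. inverse ?K * ?R us) us"
      using u by (simp add: dmult_smult2 algebra_simps)
  qed
  show ?thesis
    using u Q R eq bpair_is_dual[OF B] by (intro exI[of _ "inverse ?K"] exI[of _ x] conjI) auto
qed

end


context tri
begin

lemma dpow_scale1: fixes v :: "('n \<Rightarrow> 'a) \<Rightarrow> 'a" shows "dpow (\<lambda>c. m * v c) 1 = (\<lambda>us. m * dpow v 1 us)"
proof
  fix us :: "('n \<Rightarrow> 'a) list"
  show "dpow (\<lambda>c. m * v c) 1 us = m * dpow v 1 us"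
  proof (cases "length us = 1")
    case True
    then obtain a where "us = [a]" by (cases us) auto
    then show ?thesis by (simp add: dpow_def)
  next
    case False then show ?thesis by (simp add: dpow_def)
  qed
qed

lemma caseB:
  fixes e0 :: "nat \<Rightarrow> 'n \<Rightarrow> 'a"
  assumes B0: "bpair d e0 x0" and d: "1 \<le> d" and all: "\<forall>v. phi [v,v,v] = 0" and uw: "phi [u,u,w] \<noteq> 0"
  shows "\<exists>alpha xs. alpha \<noteq> 0 \<and> is_dual_basis d xs \<and> 2 \<le> d \<and>
    (\<exists>phi20 phi30. phi20 \<in> Dsub 2 (span_from2 d xs) \<and> phi30 \<in> Dsub 3 (span_from2 d xs) \<and>
       (\<lambda>us. alpha * phi us) = (\<lambda>us. dmult 2 1 (dpow (xs 1) 2) (dpow (xs 2) 1) us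
               + dmult 1 2 (dpow (xs 1) 1) phi20 us + phi30 us))"
proof -
  obtain e1 x1 where B1: "bpair d e1 x1" and e11: "e1 1 = u"
    using get_basis_u[OF B0 d u_nz[OF uw]] by blast
  have one: "(1::nat) \<in> {1..d}" using d by simp
  have "\<exists>j\<in>{1..d}. phi [u,u,e1 j] \<noteq> 0"
  proof (rule ccontr)
    assume "\<not> (\<exists>j\<in>{1..d}. phi [u,u,e1 j] \<noteq> 0)"
    then have "\<forall>j\<in>{1..d}. phi [u,u,e1 j] = 0" by blast
    then have "phi [u,u,w] = 0" using bpair_linexp[OF B1 lam_lin, of u u w] by simp
    with uw show False by simp
  qed
  then obtain j where j: "j \<in> {1..d}" "phi [u,u,e1 j] \<noteq> 0" by blast
  have j1: "j \<noteq> 1" using j e11 all by auto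
  have d2: "2 \<le> d" using j j1 by auto
  have two: "(2::nat) \<in> {1..d}" using d2 by simp
  have B2: "bpair d (\<lambda>k. e1 (sw j 2 k)) (\<lambda>k. x1 (sw j 2 k))" by (rule bpair_swap[OF B1 j(1) two])
  define e2 where "e2 = (\<lambda>k. e1 (sw j 2 k))"
  define x2 where "x2 = (\<lambda>k. x1 (sw j 2 k))"
  have B2': "bpair d e2 x2" using B2 by (simp add: e2_def x2_def)
  have e21: "e2 1 = u" using j1 e11 by (simp add: e2_def sw_def)
  have e22: "e2 2 = e1 j" by (simp add: e2_def sw_def)
  let ?m = "phi [u,u,e2 2]"
  have m: "?m \<noteq> 0" using j e22 by simp
  define c where "c = (\<lambda>k. phi [u,u,e2 k] * inverse ?m)"
  define e where "e = (\<lambda>k. if k = 2 then e2 2 else (\<lambda>t. e2 k t + (- c k) * e2 2 t))"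
  define x where "x = (\<lambda>i. if i = 2 then (\<lambda>v. x2 2 v + (\<Sum>k\<in>{1..d}-{2}. c k * x2 k v)) else x2 i)"
  have B: "bpair d e x" unfolding e_def x_def by (rule bpair_shear[OF B2' two])
  have c1: "c 1 = 0" using all e21 by (simp add: c_def)
  have e1u: "e 1 = u" using e21 c1 by (simp add: e_def)
  have e2m: "phi [u,u,e 2] = ?m" by (simp add: e_def)
  have ker: "phi [u,u,e k] = 0" if k: "k \<in> {1..d}" "k \<noteq> 2" for k
  proof -
    have "e k = (\<lambda>t. e2 k t + (- c k) * e2 2 t)" using k by (simp add: e_def)
    then have "phi [u,u,e k] = phi [u,u,e2 k] + (- c k) * ?m"
      using add3[of u u "e2 k" "\<lambda>t. (- c k) * e2 2 t"] sc3[of u u "- c k" "e2 2"] by simp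
    then show ?thesis using m by (simp add: c_def)
  qed
  have L: "(\<lambda>c. phi [e 1, e 1, PS {2..d} e x c]) = (\<lambda>c. ?m * x 2 c)"
  proof
    fix v
    have "phi [e 1, e 1, PS {2..d} e x v] = (\<Sum>k\<in>{2..d}. x k v * phi [u, u, e k])"
      unfolding PS_def e1u by (rule sumsc3) simp
    also have "\<dots> = (\<Sum>k\<in>{2..d}. if k = 2 then x 2 v * ?m else 0)"
      by (rule sum.cong) (use ker e2m in auto)
    also have "\<dots> = ?m * x 2 v" using d2 by simp
    finally show "phi [e 1, e 1, PS {2..d} e x v] = ?m * x 2 v" .
  qed
  have K0: "phi [e 1, e 1, e 1] = 0" using all by simp
  let ?Q = "\<lambda>us. if length us = 2 then phi [e 1, PS {2..d} e x (us!0), PS {2..d} e x (us!1)] else 0"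
  let ?R = "\<lambda>us. if length us = 3 then phi [PS {2..d} e x (us!0), PS {2..d} e x (us!1), PS {2..d} e x (us!2)] else 0"
  have sub: "{2..d} \<subseteq> {2..d}" by simp
  have Q: "(\<lambda>us. inverse ?m * ?Q us) \<in> Dsub 2 (span_from2 d x)"
    by (rule Dsub_smult[OF claim2[OF finite_atLeastAtMost sub]])
  have R: "(\<lambda>us. inverse ?m * ?R us) \<in> Dsub 3 (span_from2 d x)"
    by (rule Dsub_smult[OF claim3[OF finite_atLeastAtMost sub]])
  have dec: "phi = (\<lambda>us. phi [e 1, e 1, e 1] * dpow (x 1) 3 us
     + dmono [(x 1, 2), (\<lambda>c. phi [e 1, e 1, PS {2..d} e x c], 1)] us
     + dmult 1 2 (dpow (x 1) 1) ?Q us + ?R us)"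
    by (rule decomp[OF B d])
  have dm: "dmono [(x 1, 2), (\<lambda>c. ?m * x 2 c, 1)] us = ?m * dmult 2 1 (dpow (x 1) 2) (dpow (x 2) 1) us" for us
    unfolding dmono_21f dpow_scale1 by (rule dmult_smult2)
  have eq: "(\<lambda>us. inverse ?m * phi us) = (\<lambda>us. dmult 2 1 (dpow (x 1) 2) (dpow (x 2) 1) us
      + dmult 1 2 (dpow (x 1) 1) (\<lambda>us. inverse ?m * ?Q us) us + (\<lambda>us. inverse ?m * ?R us) us)"
  proof
    fix us
    have "phi us = ?m * dmult 2 1 (dpow (x 1) 2) (dpow (x 2) 1) us + dmult 1 2 (dpow (x 1) 1) ?Q us + ?R us"
      using fun_cong[OF dec[unfolded L K0], of us] unfolding dm by simp
    then show "inverse ?m * phi us = dmult 2 1 (dpow (x 1) 2) (dpow (x 2) 1) us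
      + dmult 1 2 (dpow (x 1) 1) (\<lambda>us. inverse ?m * ?Q us) us + (\<lambda>us. inverse ?m * ?R us) us"
      using m by (simp add: dmult_smult2 algebra_simps)
  qed
  show ?thesis
    using m Q R eq d2 bpair_is_dual[OF B] by (intro exI[of _ "inverse ?m"] exI[of _ x] conjI) auto
qed

end


context tri
begin

lemma char2:
  assumes alt: "\<forall>u v. phi [u,u,v] = 0" and nz: "phi \<noteq> (\<lambda>us. 0)"
  shows "CHAR('a) = 2"
proof -
  have two: "(2::'a) = 0"
  proof (rule ccontr)
    assume t: "(2::'a) \<noteq> 0"
    have z: "phi [a,b,c] = 0" for a b c
    proof -
      have "0 = phi [(\<lambda>t. a t + b t), (\<lambda>t. a t + b t), c]" using alt by simp
      also have "\<dots> = phi [a,a,c] + phi [a,b,c] + (phi [b,a,c] + phi [b,b,c])" by (simp add: add1 add2)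
      also have "\<dots> = 2 * phi [a,b,c]" using alt sym12[of b a c] by simp
      finally show ?thesis using t by simp
    qed
    have "phi = (\<lambda>us. 0)"
    proof
      fix us :: "('n \<Rightarrow> 'a) list"
      show "phi us = 0"
      proof (cases "length us = 3")
        case True
        then obtain a b c where "us = [a,b,c]" using length3 by blast
        then show ?thesis using z by simp
      next
        case False then show ?thesis by (rule off)
      qed
    qed
    with nz show False by simp
  qed
  have "of_nat 2 = (0::'a)" using two by simp
  then have dv: "CHAR('a) dvd 2" by (simp only: of_nat_eq_0_iff_char_dvd)
  have "CHAR('a) \<noteq> Suc 0" by (rule CHAR_not_1)
  moreover have "CHAR('a) \<noteq> 0" using dv by (metis dvd_0_left_iff zero_neq_numeral)
  moreover have "CHAR('a) \<le> 2" using dv by (simp add: dvd_imp_le)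
  ultimately show ?thesis by linarith
qed

lemma caseC:
  fixes e :: "nat \<Rightarrow> 'n \<Rightarrow> 'a"
  assumes B: "bpair d e x" and alt: "\<forall>u v. phi [u,u,v] = 0"
  shows "phi = (\<lambda>us. \<Sum>(i, j, l)\<in>{(i, j, l). 1 \<le> i \<and> i < j \<and> j < l \<and> l \<le> d}.
                 (\<lambda>i j l. phi [e i, e j, e l]) i j l * dmult 1 2 (dpow (x i) 1)
                                     (dmult 1 1 (dpow (x j) 1) (dpow (x l) 1)) us)"
proof
  fix us :: "('n \<Rightarrow> 'a) list"
  have P: "PS {1..d} e x v = v" for v using bpair_rec[OF B, of v] by (simp add: PS_def)
  show "phi us = (\<Sum>(i, j, l)\<in>{(i, j, l). 1 \<le> i \<and> i < j \<and> j < l \<and> l \<le> d}.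
                 (\<lambda>i j l. phi [e i, e j, e l]) i j l * dmult 1 2 (dpow (x i) 1)
                                     (dmult 1 1 (dpow (x j) 1) (dpow (x l) 1)) us)"
  proof (cases "length us = 3")
    case True
    then obtain a b c where us: "us = [a,b,c]" using length3 by blast
    show ?thesis unfolding us using alt3[OF alt, where e=e and x=x and m=d and a=a and b=b and c=c] unfolding P by simp
  next
    case False
    then show ?thesis by (simp add: off dmult_off)
  qed
qed

end

theorem lemma3p1:
  fixes phi3 :: "('n::finite \<Rightarrow> 'a::field) list \<Rightarrow> 'a"
  assumes "phi3 \<in> Dsp 3"
    and "phi3 \<noteq> (\<lambda>us. 0)"
  shows "\<exists>(alpha::'a) xs. alpha \<noteq> 0 \<and> is_dual_basis CARD('n) xs \<and>
    ((\<exists>phi20 phi30. phi20 \<in> Dsub 2 (span_from2 CARD('n) xs) \<and>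
                    phi30 \<in> Dsub 3 (span_from2 CARD('n) xs) \<and>
       (\<lambda>us. alpha * phi3 us) =
         (\<lambda>us. dpow (xs 1) 3 us + dmult 1 2 (dpow (xs 1) 1) phi20 us + phi30 us))
   \<or> (2 \<le> CARD('n) \<and> (\<exists>phi20 phi30. phi20 \<in> Dsub 2 (span_from2 CARD('n) xs) \<and>
                    phi30 \<in> Dsub 3 (span_from2 CARD('n) xs) \<and>
       (\<lambda>us. alpha * phi3 us) =
         (\<lambda>us. dmult 2 1 (dpow (xs 1) 2) (dpow (xs 2) 1) us
               + dmult 1 2 (dpow (xs 1) 1) phi20 us + phi30 us)))
   \<or> (CHAR('a) = 2 \<and> (\<exists>c :: nat \<Rightarrow> nat \<Rightarrow> nat \<Rightarrow> 'a.
       phi3 = (\<lambda>us. \<Sum>(i, j, l)\<in>{(i, j, l). 1 \<le> i \<and> i < j \<and> j < l \<and> l \<le> CARD('n)}.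
                 c i j l * dmult 1 2 (dpow (xs i) 1)
                                     (dmult 1 1 (dpow (xs j) 1) (dpow (xs l) 1)) us))))"
proof -
  interpret tri phi3 by unfold_locales (rule assms(1))
  obtain g :: "nat \<Rightarrow> 'n" where g: "bij_betw g {1..CARD('n)} UNIV"
    using ex_bij_betw_nat_finite_1[OF finite_class.finite_UNIV] by blast
  let ?e0 = "\<lambda>i t. if t = g i then (1::'a) else 0"
  let ?x0 = "\<lambda>i (v::'n \<Rightarrow> 'a). v (g i)"
  have B0: "bpair CARD('n) ?e0 ?x0" by (rule bpair_std[OF g])
  have d: "1 \<le> CARD('n)" by (simp add: Suc_le_eq)
  show ?thesis
  proof (cases "\<exists>u. phi3 [u,u,u] \<noteq> 0")
    case True
    then obtain u where u: "phi3 [u,u,u] \<noteq> 0" by blast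
    show ?thesis using caseA[OF B0 d u] by blast
  next
    case nA: False
    show ?thesis
    proof (cases "\<exists>u w. phi3 [u,u,w] \<noteq> 0")
      case True
      then obtain u w where uw: "phi3 [u,u,w] \<noteq> 0" by blast
      have all: "\<forall>v. phi3 [v,v,v] = 0" using nA by blast
      show ?thesis using caseB[OF B0 d all uw] by blast
    next
      case False
      then have alt: "\<forall>u v. phi3 [u,u,v] = 0" by blast
      have ch: "CHAR('a) = 2" by (rule char2[OF alt assms(2)])
      have "phi3 = (\<lambda>us. \<Sum>(i, j, l)\<in>{(i, j, l). 1 \<le> i \<and> i < j \<and> j < l \<and> l \<le> CARD('n)}.
                 (\<lambda>i j l. phi3 [?e0 i, ?e0 j, ?e0 l]) i j l * dmult 1 2 (dpow (?x0 i) 1)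
                                     (dmult 1 1 (dpow (?x0 j) 1) (dpow (?x0 l) 1)) us)"
        by (rule caseC[OF B0 alt])
      then show ?thesis using ch bpair_is_dual[OF B0]
        by (intro exI[of _ "1::'a"] exI[of _ ?x0] conjI disjI2) auto
    qed
  qed
qed

end
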